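(* Let $G=(V,E)$ be a connected graph with positive edge costs $c:E\to\mathbb{R}_+$, let $\alpha\ge1$, and let $(U,\complement{U})$ be an $\alpha$-approximate minimum cut of $G$. Let $\mathcal{C}=\{Q\subsetneq V:\complement{U}\subsetneq Q,\ d(Q)\le d(U)\}$ and suppose $\mathcal{C}\ne\emptyset$. Let $S\subseteq U$ be a minimal (with respect to inclusion) set such that $S\cap Q\ne\emptyset$ for all $Q\in\mathcal{C}$. Then $|S|\le\lfloor 2\alpha\rfloor+1$.
   Context: A cut is a partition of $V$ into two non-empty parts; for $\emptyset\ne U\subsetneq V$ write $\complement{U}=V\setminus U$ and $d(U)$ for the total cost of edges with exactly one endpoint in $U$. Let $\lambda=\min\{d(U):\emptyset\ne U\subsetneq V\}$; $(U,\complement{U})$ is an $\alpha$-approximate minimum cut if $d(U)\le\alpha\lambda$. *)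

theory Defs
  imports Complex_Main
begin

definition graph :: "'a set \<Rightarrow> 'a set set \<Rightarrow> bool" where
  "graph V E \<longleftrightarrow> finite V \<and> (\<forall>e\<in>E. e \<subseteq> V \<and> card e = 2)"

definition adj :: "'a set set \<Rightarrow> ('a \<times> 'a) set" where
  "adj E = {(u, v). {u, v} \<in> E}"

definition connected_graph :: "'a set \<Rightarrow> 'a set set \<Rightarrow> bool" where
  "connected_graph V E \<longleftrightarrow> graph V E \<and> (\<forall>u\<in>V. \<forall>v\<in>V. (u, v) \<in> (adj E)\<^sup>*)"

definition cut_cost :: "'a set set \<Rightarrow> ('a set \<Rightarrow> real) \<Rightarrow> 'a set \<Rightarrow> real" where
  "cut_cost E c U = (\<Sum>e\<in>{e\<in>E. card (e \<inter> U) = 1}. c e)"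

definition min_cut_value :: "'a set \<Rightarrow> 'a set set \<Rightarrow> ('a set \<Rightarrow> real) \<Rightarrow> real" where
  "min_cut_value V E c = Min {cut_cost E c U | U. U \<noteq> {} \<and> U \<subset> V}"

definition approx_min_cut :: "'a set \<Rightarrow> 'a set set \<Rightarrow> ('a set \<Rightarrow> real) \<Rightarrow> real \<Rightarrow> 'a set \<Rightarrow> bool" where
  "approx_min_cut V E c \<alpha> U \<longleftrightarrow> U \<noteq> {} \<and> U \<subset> V \<and> cut_cost E c U \<le> \<alpha> * min_cut_value V E c"

end

theory Submission
  imports Defs
begin

lemma card_single_le:
  assumes "finite S"
  shows "card {s\<in>S. P = {s}} \<le> (if card P = 1 then 1 else 0)"
proof (cases "card P = 1")
  case True
  then obtain p where "P = {p}" using card_1_singletonE by blast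
  then have "{s\<in>S. P = {s}} \<subseteq> {p}" by auto
  then show ?thesis using True by (simp add: card_mono[of "{p}", simplified])
next
  case False
  then have "{s\<in>S. P = {s}} = {}" by auto
  then have "card {s\<in>S. P = {s}} = 0" by (metis card.empty)
  then show ?thesis using False by simp
qed

lemma comb_aux:
  fixes S P R :: "'a set"
  assumes fin: "finite S" and PS: "P \<subseteq> S" and RS: "R \<subseteq> S" and ab: "card P \<le> card R"
  shows "card {s\<in>S. (P={s}) \<noteq> (R={s})} + card {j\<in>{3..card S}. (j \<le> card P) \<noteq> (j \<le> card R)}
         \<le> card {s\<in>S. (s\<in>P) \<noteq> (s\<in>R)}"
proof -
  let ?a = "card P" and ?b = "card R"
  let ?Y = "{s\<in>S. (P={s}) \<noteq> (R={s})}"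
  let ?L = "{j\<in>{3..card S}. (j \<le> card P) \<noteq> (j \<le> card R)}"
  let ?D = "{s\<in>S. (s\<in>P) \<noteq> (s\<in>R)}"
  have fD: "finite ?D" using fin by simp
  have Ysub: "?Y \<subseteq> {s\<in>S. P = {s}} \<union> {s\<in>S. R = {s}}" by auto
  have cY: "card ?Y \<le> (if ?a = 1 then 1 else 0) + (if ?b = 1 then 1 else 0)"
  proof -
    have "card ?Y \<le> card ({s\<in>S. P = {s}} \<union> {s\<in>S. R = {s}})"
      using Ysub fin by (intro card_mono) auto
    also have "\<dots> \<le> card {s\<in>S. P = {s}} + card {s\<in>S. R = {s}}" by (rule card_Un_le)
    also have "\<dots> \<le> (if ?a = 1 then 1 else 0) + (if ?b = 1 then 1 else 0)"
      using card_single_le[OF fin, of P] card_single_le[OF fin, of R] by linarith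
    finally show ?thesis .
  qed
  have RP: "R - P \<subseteq> ?D" using RS by auto
  have cRP: "?b - ?a \<le> card (R - P)"
    using diff_card_le_card_Diff[of P R] PS fin finite_subset by blast
  have cD1: "?b - ?a \<le> card ?D"
    using cRP card_mono[OF fD RP] by linarith
  show ?thesis
  proof (cases "?a = ?b")
    case True
    then have L0: "?L = {}" by auto
    then have cL0: "card ?L = 0" by (metis card.empty)
    show ?thesis
    proof (cases "P = R")
      case True
      then have "?Y = {}" by auto
      then have "card ?Y = 0" by (metis card.empty)
      then show ?thesis using cL0 by linarith
    next
      case False
      show ?thesis
      proof (cases "?a = 1")
        case True
        then obtain p where p: "P = {p}" using card_1_singletonE by blast
        from True \<open>?a = ?b\<close> obtain r where r: "R = {r}" using card_1_singletonE by metis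
        have "p \<noteq> r" using p r False by auto
        then have "{p, r} \<subseteq> ?D" using p r PS RS by auto
        then have "card {p, r} \<le> card ?D" using card_mono[OF fD] by blast
        then have "2 \<le> card ?D" using \<open>p \<noteq> r\<close> by simp
        moreover have "card ?Y \<le> 2" using cY True \<open>?a = ?b\<close> by simp
        ultimately show ?thesis using cL0 by linarith
      next
        case False
        then show ?thesis using cY cL0 \<open>?a = ?b\<close> by simp
      qed
    qed
  next
    case False
    then have lt: "?a < ?b" using ab by simp
    have "?L \<subseteq> {Suc (max ?a 2)..?b}"
    proof
      fix j assume "j \<in> ?L"
      then have "3 \<le> j" "(j \<le> ?a) \<noteq> (j \<le> ?b)" by auto
      then show "j \<in> {Suc (max ?a 2)..?b}" using lt by (cases "j \<le> ?a"; cases "j \<le> ?b"; simp add: max_def)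
    qed
    then have "card ?L \<le> card {Suc (max ?a 2)..?b}" by (intro card_mono) auto
    then have cL: "card ?L \<le> ?b - max ?a 2" by simp
    have "(if ?a = 1 then 1 else 0) + (if ?b = 1 then 1 else (0::nat)) + (?b - max ?a 2) \<le> ?b - ?a"
      using lt by (simp add: max_def; presburger)
    then show ?thesis using cY cL cD1 by linarith
  qed
qed

lemma comb:
  fixes S P R :: "'a set"
  assumes fin: "finite S" and PS: "P \<subseteq> S" and RS: "R \<subseteq> S"
  shows "card {s\<in>S. (P={s}) \<noteq> (R={s})} + card {j\<in>{3..card S}. (j \<le> card P) \<noteq> (j \<le> card R)}
         \<le> card {s\<in>S. (s\<in>P) \<noteq> (s\<in>R)}"
proof (cases "card P \<le> card R")
  case True
  then show ?thesis using comb_aux[OF fin PS RS] by blast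
next
  case False
  have "card {s\<in>S. (R={s}) \<noteq> (P={s})} + card {j\<in>{3..card S}. (j \<le> card R) \<noteq> (j \<le> card P)}
         \<le> card {s\<in>S. (s\<in>R) \<noteq> (s\<in>P)}" using comb_aux[OF fin RS PS] False by simp
  moreover have "{s\<in>S. (R={s}) \<noteq> (P={s})} = {s\<in>S. (P={s}) \<noteq> (R={s})}" by blast
  moreover have "{j\<in>{3..card S}. (j \<le> card R) \<noteq> (j \<le> card P)} = {j\<in>{3..card S}. (j \<le> card P) \<noteq> (j \<le> card R)}" by blast
  moreover have "{s\<in>S. (s\<in>R) \<noteq> (s\<in>P)} = {s\<in>S. (s\<in>P) \<noteq> (s\<in>R)}" by blast
  ultimately show ?thesis by simp
qed


lemma cross_iff: "u \<noteq> v \<Longrightarrow> card ({u,v} \<inter> X) = 1 \<longleftrightarrow> ((u \<in> X) \<noteq> (v \<in> X))"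
  by (cases "u \<in> X"; cases "v \<in> X") auto

lemma graph_finE: "graph V E \<Longrightarrow> finite E"
  unfolding graph_def by (meson Pow_iff finite_Pow_iff finite_subset subsetI)

lemma cut_cost_sum: "finite E \<Longrightarrow> cut_cost E c X = (\<Sum>e\<in>E. if card (e \<inter> X) = 1 then c e else 0)"
  unfolding cut_cost_def by (simp add: sum.inter_filter)

lemma sum_cut:
  assumes "finite E" "finite I"
  shows "(\<Sum>i\<in>I. cut_cost E c (F i)) = (\<Sum>e\<in>E. c e * real (card {i\<in>I. card (e \<inter> F i) = 1}))"
proof -
  have "(\<Sum>i\<in>I. cut_cost E c (F i)) = (\<Sum>i\<in>I. \<Sum>e\<in>E. if card (e \<inter> F i) = 1 then c e else 0)"
    using assms by (simp add: cut_cost_sum)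
  also have "\<dots> = (\<Sum>e\<in>E. \<Sum>i\<in>I. if card (e \<inter> F i) = 1 then c e else 0)" by (rule sum.swap)
  also have "\<dots> = (\<Sum>e\<in>E. c e * real (card {i\<in>I. card (e \<inter> F i) = 1}))"
  proof (rule sum.cong[OF refl])
    fix e
    have "(\<Sum>i\<in>I. if card (e \<inter> F i) = 1 then c e else 0) = (\<Sum>i\<in>{i\<in>I. card (e \<inter> F i) = 1}. c e)"
      by (rule sum.inter_filter[OF assms(2), symmetric])
    also have "\<dots> = c e * real (card {i\<in>I. card (e \<inter> F i) = 1})" by simp
    finally show "(\<Sum>i\<in>I. if card (e \<inter> F i) = 1 then c e else 0) = c e * real (card {i\<in>I. card (e \<inter> F i) = 1})" .
  qed
  finally show ?thesis .
qed

lemma edge_split: "graph V E \<Longrightarrow> e \<in> E \<Longrightarrow> \<exists>u v. u \<noteq> v \<and> e = {u,v} \<and> u \<in> V \<and> v \<in> V"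
  unfolding graph_def by (metis card_2_iff insert_subset)

lemma compl_cut:
  assumes g: "graph V E" and X: "X \<subseteq> V"
  shows "cut_cost E c (V - X) = cut_cost E c X"
proof -
  have "{e\<in>E. card (e \<inter> (V - X)) = 1} = {e\<in>E. card (e \<inter> X) = 1}"
  proof (rule Collect_cong)
    fix e
    show "(e \<in> E \<and> card (e \<inter> (V - X)) = 1) = (e \<in> E \<and> card (e \<inter> X) = 1)"
    proof (cases "e \<in> E")
      case True
      then obtain u v where uv: "u \<noteq> v" "e = {u,v}" "u \<in> V" "v \<in> V" using edge_split[OF g] by blast
      have "card (e \<inter> (V - X)) = 1 \<longleftrightarrow> card (e \<inter> X) = 1"
        unfolding uv(2) using cross_iff[OF uv(1), of "V - X"] cross_iff[OF uv(1), of X] uv(3,4) by simp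
      then show ?thesis using True by simp
    qed simp
  qed
  then show ?thesis unfolding cut_cost_def by simp
qed

lemma cross_edge: "(x,y) \<in> r\<^sup>* \<Longrightarrow> x \<in> X \<Longrightarrow> y \<notin> X \<Longrightarrow> \<exists>a b. (a,b) \<in> r \<and> a \<in> X \<and> b \<notin> X"
proof (induction rule: rtrancl_induct)
  case base then show ?case by simp
next
  case (step y z)
  then show ?case by (cases "y \<in> X") auto
qed

lemma pos_cut:
  assumes cg: "connected_graph V E" and cp: "\<forall>e\<in>E. c e > 0" and ne: "X \<noteq> {}" and pr: "X \<subset> V"
  shows "cut_cost E c X > 0"
proof -
  have g: "graph V E" using cg unfolding connected_graph_def by simp
  obtain x where x: "x \<in> X" using ne by blast
  obtain y where y: "y \<in> V" "y \<notin> X" using pr by blast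
  have "(x, y) \<in> (adj E)\<^sup>*" using cg x y pr unfolding connected_graph_def by blast
  from cross_edge[OF this x y(2)] obtain a b where ab: "(a,b) \<in> adj E" "a \<in> X" "b \<notin> X" by blast
  have abE: "{a,b} \<in> E" using ab unfolding adj_def by simp
  have "a \<noteq> b" using ab by blast
  then have cr: "card ({a,b} \<inter> X) = 1" using cross_iff[of a b X] ab(2,3) by simp
  have fE: "finite E" using graph_finE[OF g] .
  let ?F = "{e\<in>E. card (e \<inter> X) = 1}"
  have "c {a,b} \<le> sum c ?F"
  proof (rule member_le_sum)
    show "{a,b} \<in> ?F" using abE cr by simp
    show "finite ?F" using fE by simp
    fix x assume "x \<in> ?F - {{a,b}}"
    then have "x \<in> E" by simp
    then show "0 \<le> c x" using cp less_imp_le by blast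
  qed
  moreover have "c {a,b} > 0" using cp abE by blast
  ultimately show ?thesis unfolding cut_cost_def by linarith
qed

lemma cutset_finite:
  assumes g: "graph V E"
  shows "finite {cut_cost E c U |U. U \<noteq> {} \<and> U \<subset> V}"
proof -
  have fV: "finite V" using g unfolding graph_def by simp
  have "{cut_cost E c U |U. U \<noteq> {} \<and> U \<subset> V} = (\<lambda>U. cut_cost E c U) ` {U. U \<noteq> {} \<and> U \<subset> V}" by blast
  moreover have "finite {U. U \<noteq> {} \<and> U \<subset> V}"
    by (rule finite_subset[of _ "Pow V"]) (use fV in auto)
  ultimately show ?thesis by simp
qed

lemma min_le:
  assumes g: "graph V E" and "X \<noteq> {}" "X \<subset> V"
  shows "min_cut_value V E c \<le> cut_cost E c X"
  unfolding min_cut_value_def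
  by (rule Min_le[OF cutset_finite[OF g]]) (use assms in blast)

lemma lam_pos:
  assumes cg: "connected_graph V E" and cp: "\<forall>e\<in>E. c e > 0" and "X \<noteq> {}" "X \<subset> V"
  shows "min_cut_value V E c > 0"
proof -
  have g: "graph V E" using cg unfolding connected_graph_def by simp
  have ne: "{cut_cost E c U |U. U \<noteq> {} \<and> U \<subset> V} \<noteq> {}" using assms by blast
  have "min_cut_value V E c \<in> {cut_cost E c U |U. U \<noteq> {} \<and> U \<subset> V}"
    unfolding min_cut_value_def by (rule Min_in[OF cutset_finite[OF g] ne])
  then obtain U where "U \<noteq> {}" "U \<subset> V" "min_cut_value V E c = cut_cost E c U" by blast
  then show ?thesis using pos_cut[OF cg cp] by simp
qed

theorem lemma2p3:
  fixes V :: "'a set" and E :: "'a set set" and c :: "'a set \<Rightarrow> real"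
    and \<alpha> :: real and U S :: "'a set" and \<C> :: "'a set set"
  assumes "connected_graph V E"
    and "\<forall>e\<in>E. c e > 0"
    and "\<alpha> \<ge> 1"
    and "approx_min_cut V E c \<alpha> U"
    and "\<C> = {Q. Q \<subset> V \<and> V - U \<subset> Q \<and> cut_cost E c Q \<le> cut_cost E c U}"
    and "\<C> \<noteq> {}"
    and "S \<subseteq> U" and "\<forall>Q\<in>\<C>. S \<inter> Q \<noteq> {}"
    and "\<forall>S'. S' \<subset> S \<longrightarrow> \<not> (\<forall>Q\<in>\<C>. S' \<inter> Q \<noteq> {})"
  shows "real (card S) \<le> of_int \<lfloor>2 * \<alpha>\<rfloor> + 1"
proof -
  note cg = assms(1) and cp = assms(2) and am = assms(4) and Cdef = assms(5)
    and SU = assms(7) and hit = assms(8) and mini = assms(9)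
  have g: "graph V E" using cg unfolding connected_graph_def by simp
  have fV: "finite V" using g unfolding graph_def by simp
  have fE: "finite E" using graph_finE[OF g] .
  have Une: "U \<noteq> {}" and UV: "U \<subset> V" and dU: "cut_cost E c U \<le> \<alpha> * min_cut_value V E c"
    using am unfolding approx_min_cut_def by auto
  have SV: "S \<subseteq> V" using SU UV by auto
  have fS: "finite S" using SV fV finite_subset by blast
  define k where "k = card S"
  define lam where "lam = min_cut_value V E c"
  define dU where "dU = cut_cost E c U"
  have lampos: "lam > 0" unfolding lam_def by (rule lam_pos[OF cg cp Une UV])
  have "\<forall>s\<in>S. \<exists>Q. Q \<in> \<C> \<and> S \<inter> Q = {s}"
  proof
    fix s assume s: "s \<in> S"
    have "S - {s} \<subset> S" using s by blast
    then obtain Q where Q: "Q \<in> \<C>" "(S - {s}) \<inter> Q = {}" using mini by blast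
    have "S \<inter> Q \<noteq> {}" using hit Q by blast
    then have "S \<inter> Q = {s}" using Q s by blast
    then show "\<exists>Q. Q \<in> \<C> \<and> S \<inter> Q = {s}" using Q by blast
  qed
  then obtain Q where Q: "\<And>s. s \<in> S \<Longrightarrow> Q s \<in> \<C> \<and> S \<inter> Q s = {s}" by metis
  have QV: "\<And>s. s \<in> S \<Longrightarrow> Q s \<subset> V" and WQ: "\<And>s. s \<in> S \<Longrightarrow> V - U \<subset> Q s"
    and dQ: "\<And>s. s \<in> S \<Longrightarrow> cut_cost E c (Q s) \<le> dU"
    using Q Cdef dU_def by auto
  define P where "P w = {t\<in>S. w \<in> Q t}" for w
  define Y where "Y s = {w\<in>V. P w = {s}}" for s
  define G where "G j = {w\<in>V. j \<le> card (P w)}" for j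
  have PS: "\<And>w. P w \<subseteq> S" unfolding P_def by auto
  have Ps: "\<And>s. s \<in> S \<Longrightarrow> P s = {s}"
  proof -
    fix s assume s: "s \<in> S"
    have "\<And>t. t \<in> S \<Longrightarrow> s \<in> Q t \<longleftrightarrow> t = s"
    proof -
      fix t assume t: "t \<in> S"
      have "S \<inter> Q t = {t}" using Q t by blast
      then show "s \<in> Q t \<longleftrightarrow> t = s" using s t by auto
    qed
    then show "P s = {s}" unfolding P_def using s by auto
  qed
  have lamY: "\<And>s. s \<in> S \<Longrightarrow> lam \<le> cut_cost E c (Y s)"
  proof -
    fix s assume s: "s \<in> S"
    have "s \<in> Y s" unfolding Y_def using Ps[OF s] s SV by auto
    moreover have "Y s \<subseteq> Q s" unfolding Y_def P_def by auto
    ultimately have "Y s \<noteq> {}" "Y s \<subset> V" using QV[OF s] by auto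
    then show "lam \<le> cut_cost E c (Y s)" unfolding lam_def by (rule min_le[OF g])
  qed
  have sumY1: "real k * lam \<le> (\<Sum>s\<in>S. cut_cost E c (Y s))"
  proof -
    have "(\<Sum>s\<in>S. lam) \<le> (\<Sum>s\<in>S. cut_cost E c (Y s))" by (rule sum_mono) (rule lamY)
    then show ?thesis unfolding k_def by simp
  qed
  have Gge: "\<And>j. j \<in> {3..k} \<Longrightarrow> dU \<le> cut_cost E c (G j)"
  proof -
    fix j assume j: "j \<in> {3..k}"
    have WG: "V - U \<subseteq> G j"
    proof
      fix w assume w: "w \<in> V - U"
      have "P w = S" unfolding P_def using WQ w by auto
      then show "w \<in> G j" unfolding G_def using w j k_def by auto
    qed
    have GS: "G j \<inter> S = {}" unfolding G_def using Ps j by auto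
    have GV: "G j \<subseteq> V" unfolding G_def by auto
    show "dU \<le> cut_cost E c (G j)"
    proof (cases "G j = V - U")
      case True
      then show ?thesis unfolding dU_def using compl_cut[OF g, of U c] UV by simp
    next
      case False
      have "S \<noteq> {}" using j k_def by auto
      then obtain s where "s \<in> S" by blast
      then have "G j \<subset> V" using GS GV SV by blast
      moreover have "V - U \<subset> G j" using WG False by blast
      moreover have "G j \<notin> \<C>"
      proof
        assume "G j \<in> \<C>"
        then have "S \<inter> G j \<noteq> {}" using hit by blast
        then show False using GS by blast
      qed
      ultimately have "\<not> cut_cost E c (G j) \<le> dU"
        unfolding Cdef dU_def by simp
      then show ?thesis by simp
    qed
  qed
  have sumG: "real (card {3..k}) * dU \<le> (\<Sum>j\<in>{3..k}. cut_cost E c (G j))"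
  proof -
    have "(\<Sum>j\<in>{3..k}. dU) \<le> (\<Sum>j\<in>{3..k}. cut_cost E c (G j))" by (rule sum_mono) (rule Gge)
    then show ?thesis by simp
  qed
  have sumQ: "(\<Sum>s\<in>S. cut_cost E c (Q s)) \<le> real k * dU"
  proof -
    have "(\<Sum>s\<in>S. cut_cost E c (Q s)) \<le> (\<Sum>s\<in>S. dU)" by (rule sum_mono) (rule dQ)
    then show ?thesis unfolding k_def by simp
  qed
  have edge: "(\<Sum>s\<in>S. cut_cost E c (Y s)) + (\<Sum>j\<in>{3..k}. cut_cost E c (G j))
      \<le> (\<Sum>s\<in>S. cut_cost E c (Q s))"
  proof -
    have "(\<Sum>s\<in>S. cut_cost E c (Y s)) + (\<Sum>j\<in>{3..k}. cut_cost E c (G j))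
      = (\<Sum>e\<in>E. c e * real (card {s\<in>S. card (e \<inter> Y s) = 1}) + c e * real (card {j\<in>{3..k}. card (e \<inter> G j) = 1}))"
      using sum_cut[OF fE fS, of c Y] sum_cut[OF fE, of "{3..k}" c G] by (simp add: sum.distrib)
    also have "\<dots> \<le> (\<Sum>e\<in>E. c e * real (card {s\<in>S. card (e \<inter> Q s) = 1}))"
    proof (rule sum_mono)
      fix e assume e: "e \<in> E"
      then obtain u v where uv: "u \<noteq> v" "e = {u,v}" "u \<in> V" "v \<in> V" using edge_split[OF g] by blast
      have e1: "{s\<in>S. card (e \<inter> Y s) = 1} = {s\<in>S. (P u = {s}) \<noteq> (P v = {s})}"
        using cross_iff[OF uv(1)] uv unfolding Y_def by auto
      have e2: "{j\<in>{3..k}. card (e \<inter> G j) = 1} = {j\<in>{3..card S}. (j \<le> card (P u)) \<noteq> (j \<le> card (P v))}"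
        using cross_iff[OF uv(1)] uv unfolding G_def k_def by auto
      have e3: "{s\<in>S. card (e \<inter> Q s) = 1} = {s\<in>S. (s \<in> P u) \<noteq> (s \<in> P v)}"
        using cross_iff[OF uv(1)] uv unfolding P_def by auto
      have "card {s\<in>S. card (e \<inter> Y s) = 1} + card {j\<in>{3..k}. card (e \<inter> G j) = 1}
            \<le> card {s\<in>S. card (e \<inter> Q s) = 1}"
        unfolding e1 e2 e3 by (rule comb[OF fS PS PS])
      then have "real (card {s\<in>S. card (e \<inter> Y s) = 1}) + real (card {j\<in>{3..k}. card (e \<inter> G j) = 1})
            \<le> real (card {s\<in>S. card (e \<inter> Q s) = 1})" by linarith
      then have "c e * (real (card {s\<in>S. card (e \<inter> Y s) = 1}) + real (card {j\<in>{3..k}. card (e \<inter> G j) = 1}))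
            \<le> c e * real (card {s\<in>S. card (e \<inter> Q s) = 1})"
        using cp e by (intro mult_left_mono) auto
      then show "c e * real (card {s\<in>S. card (e \<inter> Y s) = 1}) + c e * real (card {j\<in>{3..k}. card (e \<inter> G j) = 1})
            \<le> c e * real (card {s\<in>S. card (e \<inter> Q s) = 1})" by (simp add: distrib_left)
    qed
    also have "\<dots> = (\<Sum>s\<in>S. cut_cost E c (Q s))" using sum_cut[OF fE fS, of c Q] by simp
    finally show ?thesis .
  qed
  have dUnn: "0 \<le> dU" unfolding dU_def cut_cost_def using cp by (intro sum_nonneg) auto
  have ck: "real k - 2 \<le> real (card {3..k})" by simp
  have "(real k - 2) * dU \<le> real (card {3..k}) * dU" using ck dUnn by (rule mult_right_mono)
  then have "real k * lam \<le> 2 * dU" using sumY1 sumG sumQ edge by (simp add: algebra_simps)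
  also have "\<dots> \<le> 2 * (\<alpha> * lam)" using dU unfolding dU_def lam_def by simp
  finally have "real k * lam \<le> (2 * \<alpha>) * lam" by simp
  then have "real k \<le> 2 * \<alpha>" using lampos by simp
  then have "int k \<le> \<lfloor>2 * \<alpha>\<rfloor>" by (simp add: le_floor_iff)
  then show ?thesis unfolding k_def by linarith
qed

end
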